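(* Let $X$ be an $n\times n$ complex matrix and $Y$ an $m\times m$ complex matrix, and let $M=\begin{bmatrix} X & J_{nm} \\ J_{mn} & Y\end{bmatrix}$, where $J_{nm}$ denotes the $n\times m$ all-ones matrix, and write $J$ for a square all-ones matrix of the appropriate size. Then: (1) the spectra of $M$ and $J-M$ are determined by the spectra of $X$, $J-X$, $Y$ and $J-Y$; (2) the spectra of $X$ and $J-X$ are determined by the spectra of $M$, $J-M$, $Y$ and $J-Y$. Here "determined" means: if $X'$ ($n'\times n'$), $Y'$ ($m'\times m'$) and $M'$ are another such triple, then in (1) equality of the spectra (as multisets) of $X,J-X,Y,J-Y$ with those of $X',J-X',Y',J-Y'$ implies equality of the spectra of $M, J-M$ with those of $M', J-M'$, and in (2) equality of the spectra of $M,J-M,Y,J-Y$ with those of $M',J-M',Y',J-Y'$ implies equality of the spectra of $X, J-X$ with those of $X',J-X'$. *)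

theory Defs
  imports "Jordan_Normal_Form.Char_Poly" "HOL-Computational_Algebra.Polynomial"
begin

definition spec_mset :: "complex mat \<Rightarrow> complex multiset" where
  "spec_mset A = proots (char_poly A)"

definition ones_mat :: "nat \<Rightarrow> nat \<Rightarrow> complex mat" where
  "ones_mat r c = mat r c (\<lambda>_. 1)"

definition compl_mat :: "complex mat \<Rightarrow> complex mat" where
  "compl_mat A = ones_mat (dim_row A) (dim_col A) - A"

definition join_mat :: "complex mat \<Rightarrow> complex mat \<Rightarrow> complex mat" where
  "join_mat X Y = four_block_mat X (ones_mat (dim_row X) (dim_col Y))
                                  (ones_mat (dim_row Y) (dim_col X)) Y"

end

theory Submission
  imports Defs
begin

lemma schur1:
  fixes A :: "complex mat"
  assumes A: "A \<in> carrier_mat n n" and B: "B \<in> carrier_mat n m" and C: "C \<in> carrier_mat m n"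
    and D: "D \<in> carrier_mat m m" and Ai: "Ai \<in> carrier_mat n n" and inv: "A * Ai = 1\<^sub>m n"
  shows "det (four_block_mat A B C D) = det A * det (D - C * (Ai * B))"
proof -
  define N where "N = four_block_mat (1\<^sub>m n) (-(Ai * B)) (0\<^sub>m m n) (1\<^sub>m m)"
  have AiB: "Ai * B \<in> carrier_mat n m" using Ai B by auto
  have M: "four_block_mat A B C D \<in> carrier_mat (n+m) (n+m)" using A B C D by auto
  have Nc: "N \<in> carrier_mat (n+m) (n+m)" unfolding N_def using AiB by auto
  have detN: "det N = 1" unfolding N_def
    by (subst det_four_block_mat_lower_left_zero[of _ n _ m], insert AiB, auto)
  have "four_block_mat A B C D * N = four_block_mat (A * 1\<^sub>m n + B * 0\<^sub>m m n) (A * (-(Ai * B)) + B * 1\<^sub>m m)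
       (C * 1\<^sub>m n + D * 0\<^sub>m m n) (C * (-(Ai * B)) + D * 1\<^sub>m m)"
    unfolding N_def by (rule mult_four_block_mat[OF A B C D], insert AiB, auto)
  also have "A * 1\<^sub>m n + B * 0\<^sub>m m n = A" using A B by auto
  also have "A * (-(Ai * B)) + B * 1\<^sub>m m = 0\<^sub>m n m"
  proof -
    have "A * (-(Ai * B)) = - (A * (Ai * B))" using A AiB by auto
    also have "A * (Ai * B) = B" using A Ai B inv by (simp add: assoc_mult_mat[symmetric, OF A Ai B])
    finally show ?thesis using B by (intro eq_matI, auto)
  qed
  also have "C * 1\<^sub>m n + D * 0\<^sub>m m n = C" using C D by auto
  also have "C * (-(Ai * B)) + D * 1\<^sub>m m = D - C * (Ai * B)"
  proof -
    have "C * (-(Ai * B)) = - (C * (Ai * B))" using C AiB by auto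
    thus ?thesis using C D AiB by (intro eq_matI, auto)
  qed
  finally have eq: "four_block_mat A B C D * N = four_block_mat A (0\<^sub>m n m) C (D - C * (Ai * B))" .
  have "det (four_block_mat A B C D) = det (four_block_mat A B C D * N)"
    using det_mult[OF M Nc] detN by simp
  also have "\<dots> = det A * det (D - C * (Ai * B))" unfolding eq
    by (rule det_four_block_mat_upper_right_zero[OF A refl], insert C D AiB, auto intro!: minus_carrier_mat)
  finally show ?thesis .
qed

lemma schur2:
  fixes A :: "complex mat"
  assumes A: "A \<in> carrier_mat n n" and B: "B \<in> carrier_mat n m" and C: "C \<in> carrier_mat m n"
    and D: "D \<in> carrier_mat m m" and Di: "Di \<in> carrier_mat m m" and inv: "D * Di = 1\<^sub>m m"
  shows "det (four_block_mat A B C D) = det D * det (A - B * (Di * C))"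
proof -
  define N where "N = four_block_mat (1\<^sub>m n) (0\<^sub>m n m) (-(Di * C)) (1\<^sub>m m)"
  have DiC: "Di * C \<in> carrier_mat m n" using Di C by auto
  have M: "four_block_mat A B C D \<in> carrier_mat (n+m) (n+m)" using A B C D by auto
  have Nc: "N \<in> carrier_mat (n+m) (n+m)" unfolding N_def using DiC by auto
  have detN: "det N = 1" unfolding N_def
    by (subst det_four_block_mat_upper_right_zero[of _ n _ m], insert DiC, auto)
  have "four_block_mat A B C D * N = four_block_mat (A * 1\<^sub>m n + B * (-(Di * C))) (A * 0\<^sub>m n m + B * 1\<^sub>m m)
       (C * 1\<^sub>m n + D * (-(Di * C))) (C * 0\<^sub>m n m + D * 1\<^sub>m m)"
    unfolding N_def by (rule mult_four_block_mat[OF A B C D], insert DiC, auto)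
  also have "A * 1\<^sub>m n + B * (-(Di * C)) = A - B * (Di * C)" using A B DiC by (intro eq_matI, auto)
  also have "C * 1\<^sub>m n + D * (-(Di * C)) = 0\<^sub>m m n"
  proof -
    have "D * (-(Di * C)) = - (D * (Di * C))" using D DiC by auto
    also have "D * (Di * C) = C" using D Di C inv by (simp add: assoc_mult_mat[symmetric, OF D Di C])
    finally show ?thesis using C by (intro eq_matI, auto)
  qed
  also have "A * 0\<^sub>m n m + B * 1\<^sub>m m = B" using A B by auto
  also have "C * 0\<^sub>m n m + D * 1\<^sub>m m = D" using C D by auto
  finally have eq: "four_block_mat A B C D * N = four_block_mat (A - B * (Di * C)) B (0\<^sub>m m n) D" .
  have "det (four_block_mat A B C D) = det (four_block_mat A B C D * N)"
    using det_mult[OF M Nc] detN by simp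
  also have "\<dots> = det (A - B * (Di * C)) * det D" unfolding eq
    by (rule det_four_block_mat_lower_left_zero, insert A B D DiC, auto intro!: minus_carrier_mat)
  finally show ?thesis by simp
qed

lemma det_1x1: "A \<in> carrier_mat 1 1 \<Longrightarrow> det A = A $$ (0,0)"
  by (subst det_upper_triangular[of A 1], auto simp: upper_triangular_def diag_mat_def)

definition tot :: "complex mat \<Rightarrow> complex" where
  "tot A = (\<Sum>k\<in>{0..<dim_row A}. \<Sum>l\<in>{0..<dim_col A}. A $$ (k,l))"

lemma rank1:
  fixes P :: "complex mat"
  assumes P: "P \<in> carrier_mat n n" and Pv: "Pv \<in> carrier_mat n n" and inv: "P * Pv = 1\<^sub>m n"
  shows "det (P - c \<cdot>\<^sub>m ones_mat n n) = det P * (1 - c * tot Pv)"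
proof -
  define N where "N = four_block_mat P (ones_mat n 1) (c \<cdot>\<^sub>m ones_mat 1 n) (1\<^sub>m 1)"
  have o1: "ones_mat n 1 \<in> carrier_mat n 1" and o2: "c \<cdot>\<^sub>m ones_mat 1 n \<in> carrier_mat 1 n"
    by (auto simp: ones_mat_def)
  have "det N = det (1\<^sub>m 1) * det (P - ones_mat n 1 * (1\<^sub>m 1 * (c \<cdot>\<^sub>m ones_mat 1 n)))"
    unfolding N_def by (rule schur2[OF P o1 o2], auto)
  also have "P - ones_mat n 1 * (1\<^sub>m 1 * (c \<cdot>\<^sub>m ones_mat 1 n)) = P - c \<cdot>\<^sub>m ones_mat n n"
    using P by (intro eq_matI, auto simp: ones_mat_def scalar_prod_def)
  finally have 1: "det N = det (P - c \<cdot>\<^sub>m ones_mat n n)" by simp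
  have "det N = det P * det (1\<^sub>m 1 - c \<cdot>\<^sub>m ones_mat 1 n * (Pv * ones_mat n 1))"
    unfolding N_def by (rule schur1[OF P o1 o2 _ Pv inv], auto)
  also have "det (1\<^sub>m 1 - c \<cdot>\<^sub>m ones_mat 1 n * (Pv * ones_mat n 1)) = 1 - c * tot Pv"
    using Pv by (subst det_1x1, auto simp: ones_mat_def scalar_prod_def tot_def sum_distrib_left)
  finally show ?thesis using 1 by simp
qed

lemma poly_char_poly_det:
  assumes A: "(A :: complex mat) \<in> carrier_mat n n"
  shows "poly (char_poly A) s = det (s \<cdot>\<^sub>m 1\<^sub>m n - A)"
proof -
  have "- char_matrix A s = s \<cdot>\<^sub>m 1\<^sub>m n - A" using A
    by (intro eq_matI, auto simp: char_matrix_def)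
  thus ?thesis using char_poly_matrix[OF A, of s] by simp
qed

lemma inv_exists:
  fixes P :: "complex mat"
  assumes P: "P \<in> carrier_mat n n" and d: "det P \<noteq> 0"
  shows "\<exists>Pv. Pv \<in> carrier_mat n n \<and> P * Pv = 1\<^sub>m n"
proof -
  define Pv where "Pv = (1 / det P) \<cdot>\<^sub>m adj_mat P"
  have c: "Pv \<in> carrier_mat n n" unfolding Pv_def using adj_mat(1)[OF P] by auto
  have "P * Pv = (1 / det P) \<cdot>\<^sub>m (P * adj_mat P)" unfolding Pv_def
    by (rule mult_smult_distrib[OF P adj_mat(1)[OF P]])
  also have "\<dots> = 1\<^sub>m n" unfolding adj_mat(2)[OF P] using d by (intro eq_matI, auto)
  finally show ?thesis using c by blast
qed

lemma join_block: assumes X: "X \<in> carrier_mat n n" and Y: "Y \<in> carrier_mat m m"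
  shows "s \<cdot>\<^sub>m 1\<^sub>m (n+m) - join_mat X Y
    = four_block_mat (s \<cdot>\<^sub>m 1\<^sub>m n - X) (- ones_mat n m) (- ones_mat m n) (s \<cdot>\<^sub>m 1\<^sub>m m - Y)"
  using X Y by (intro eq_matI, auto simp: join_mat_def ones_mat_def)

lemma join_det:
  fixes X Y :: "complex mat"
  assumes X: "X \<in> carrier_mat n n" and Y: "Y \<in> carrier_mat m m"
    and dX: "det (s \<cdot>\<^sub>m 1\<^sub>m n - X) \<noteq> 0" and dY: "det (s \<cdot>\<^sub>m 1\<^sub>m m - Y) \<noteq> 0"
  shows "det (s \<cdot>\<^sub>m 1\<^sub>m (n+m) - join_mat X Y) =
    det (s \<cdot>\<^sub>m 1\<^sub>m n - X) * det (s \<cdot>\<^sub>m 1\<^sub>m m - Y)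
    - (det (s \<cdot>\<^sub>m 1\<^sub>m n - X + ones_mat n n) - det (s \<cdot>\<^sub>m 1\<^sub>m n - X))
    * (det (s \<cdot>\<^sub>m 1\<^sub>m m - Y + ones_mat m m) - det (s \<cdot>\<^sub>m 1\<^sub>m m - Y))"
proof -
  define P where "P = s \<cdot>\<^sub>m 1\<^sub>m n - X"
  define Q where "Q = s \<cdot>\<^sub>m 1\<^sub>m m - Y"
  have P: "P \<in> carrier_mat n n" unfolding P_def using X by auto
  have Q: "Q \<in> carrier_mat m m" unfolding Q_def using Y by auto
  obtain Pv where Pv: "Pv \<in> carrier_mat n n" and iP: "P * Pv = 1\<^sub>m n"
    using inv_exists[OF P dX[folded P_def]] by blast
  obtain Qv where Qv: "Qv \<in> carrier_mat m m" and iQ: "Q * Qv = 1\<^sub>m m"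
    using inv_exists[OF Q dY[folded Q_def]] by blast
  have o1: "- ones_mat n m \<in> carrier_mat n m" and o2: "- ones_mat m n \<in> carrier_mat m n"
    by (auto simp: ones_mat_def)
  have "det (s \<cdot>\<^sub>m 1\<^sub>m (n+m) - join_mat X Y) = det P * det (Q - (- ones_mat m n) * (Pv * (- ones_mat n m)))"
    unfolding join_block[OF X Y] P_def[symmetric] Q_def[symmetric]
    by (rule schur1[OF P o1 o2 Q Pv iP])
  also have "(- ones_mat m n) * (Pv * (- ones_mat n m)) = tot Pv \<cdot>\<^sub>m ones_mat m m"
    using Pv by (intro eq_matI, auto simp: ones_mat_def scalar_prod_def tot_def sum_distrib_left sum_negf)
  also have "det (Q - tot Pv \<cdot>\<^sub>m ones_mat m m) = det Q * (1 - tot Pv * tot Qv)"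
    by (rule rank1[OF Q Qv iQ])
  finally have 1: "det (s \<cdot>\<^sub>m 1\<^sub>m (n+m) - join_mat X Y) = det P * (det Q * (1 - tot Pv * tot Qv))" .
  have "P + ones_mat n n = P - (-1) \<cdot>\<^sub>m ones_mat n n" using P by (intro eq_matI, auto simp: ones_mat_def)
  hence 2: "det (P + ones_mat n n) = det P * (1 + tot Pv)" using rank1[OF P Pv iP, of "-1"] by simp
  have "Q + ones_mat m m = Q - (-1) \<cdot>\<^sub>m ones_mat m m" using Q by (intro eq_matI, auto simp: ones_mat_def)
  hence 3: "det (Q + ones_mat m m) = det Q * (1 + tot Qv)" using rank1[OF Q Qv iQ, of "-1"] by simp
  show ?thesis unfolding P_def[symmetric] Q_def[symmetric] 1 2 3 by (simp add: algebra_simps)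
qed

lemma compl_join_det:
  fixes X Y :: "complex mat"
  assumes X: "X \<in> carrier_mat n n" and Y: "Y \<in> carrier_mat m m"
  shows "det (s \<cdot>\<^sub>m 1\<^sub>m (n+m) - compl_mat (join_mat X Y)) =
    det (s \<cdot>\<^sub>m 1\<^sub>m n - compl_mat X) * det (s \<cdot>\<^sub>m 1\<^sub>m m - compl_mat Y)"
proof -
  have "s \<cdot>\<^sub>m 1\<^sub>m (n+m) - compl_mat (join_mat X Y) = four_block_mat (s \<cdot>\<^sub>m 1\<^sub>m n - compl_mat X) (0\<^sub>m n m)
     (0\<^sub>m m n) (s \<cdot>\<^sub>m 1\<^sub>m m - compl_mat Y)"
    using X Y by (intro eq_matI, auto simp: join_mat_def ones_mat_def compl_mat_def)
  thus ?thesis using X Y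
    by (simp, subst det_four_block_mat_upper_right_zero[of _ n _ m], auto simp: compl_mat_def ones_mat_def)
qed

lemma cp_spec: assumes A: "(A :: complex mat) \<in> carrier_mat n n"
  shows "char_poly A = (\<Prod>x\<in>#spec_mset A. [:-x, 1:])"
proof -
  have "lead_coeff (char_poly A) = 1" using degree_monic_char_poly[OF A] by simp
  thus ?thesis using complex_poly_decompose_multiset[of "char_poly A"] unfolding spec_mset_def by simp
qed

lemma spec_cp: assumes A: "(A :: complex mat) \<in> carrier_mat n n" and B: "B \<in> carrier_mat n' n'"
  shows "spec_mset A = spec_mset B \<longleftrightarrow> char_poly A = char_poly B"
  using cp_spec[OF A] cp_spec[OF B] unfolding spec_mset_def by metis

lemma cp_nz: "(A :: complex mat) \<in> carrier_mat n n \<Longrightarrow> char_poly A \<noteq> 0"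
  using degree_monic_char_poly[of A n] by auto

lemma cp_deg: "(A :: complex mat) \<in> carrier_mat n n \<Longrightarrow> degree (char_poly A) = n"
  using degree_monic_char_poly[of A n] by auto

lemma poly_eq_cofinite:
  fixes p q :: "complex poly"
  assumes F: "finite F" and eq: "\<And>s. s \<notin> F \<Longrightarrow> poly p s = poly q s"
  shows "p = q"
proof (rule ccontr)
  assume "p \<noteq> q"
  hence "p - q \<noteq> 0" by simp
  hence "finite {s. poly (p - q) s = 0}" by (rule poly_roots_finite)
  hence "finite (F \<union> {s. poly (p - q) s = 0})" using F by simp
  then obtain s where "s \<notin> F \<union> {s. poly (p - q) s = 0}"
    using ex_new_if_finite[OF infinite_UNIV_char_0] by blast
  thus False using eq[of s] by simp
qed

definition Qp :: "complex mat \<Rightarrow> nat \<Rightarrow> complex poly" where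
  "Qp A n = Polynomial.smult ((-1)^n) (pcompose (char_poly (compl_mat A)) [:0,-1:])"

lemma compl_carrier: "A \<in> carrier_mat n n \<Longrightarrow> compl_mat A \<in> carrier_mat n n"
  by (auto simp: compl_mat_def ones_mat_def)

lemma join_carrier: "X \<in> carrier_mat n n \<Longrightarrow> Y \<in> carrier_mat m m \<Longrightarrow> join_mat X Y \<in> carrier_mat (n+m) (n+m)"
  by (auto simp: join_mat_def ones_mat_def)

lemma poly_Qp: assumes A: "(A :: complex mat) \<in> carrier_mat n n"
  shows "poly (Qp A n) s = det (s \<cdot>\<^sub>m 1\<^sub>m n - A + ones_mat n n)"
proof -
  have "poly (Qp A n) s = (-1)^n * det ((-s) \<cdot>\<^sub>m 1\<^sub>m n - compl_mat A)"
    unfolding Qp_def using poly_char_poly_det[OF compl_carrier[OF A]] by (simp add: poly_pcompose)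
  also have "(-s) \<cdot>\<^sub>m 1\<^sub>m n - compl_mat A = (-1) \<cdot>\<^sub>m (s \<cdot>\<^sub>m 1\<^sub>m n - A + ones_mat n n)"
    using A by (intro eq_matI, auto simp: compl_mat_def ones_mat_def)
  also have "(-1)^n * det \<dots> = det (s \<cdot>\<^sub>m 1\<^sub>m n - A + ones_mat n n)" using A
    by (simp add: ones_mat_def flip: power_mult_distrib)
  finally show ?thesis .
qed

lemma cp_join: assumes X: "(X :: complex mat) \<in> carrier_mat n n" and Y: "Y \<in> carrier_mat m m"
  shows "char_poly (join_mat X Y) = char_poly X * char_poly Y
     - (Qp X n - char_poly X) * (Qp Y m - char_poly Y)"
proof (rule poly_eq_cofinite[of "{s. poly (char_poly X * char_poly Y) s = 0}"])
  show "finite {s. poly (char_poly X * char_poly Y) s = 0}"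
    by (rule poly_roots_finite, insert cp_nz[OF X] cp_nz[OF Y], simp)
  fix s assume "s \<notin> {s. poly (char_poly X * char_poly Y) s = 0}"
  hence dX: "det (s \<cdot>\<^sub>m 1\<^sub>m n - X) \<noteq> 0" and dY: "det (s \<cdot>\<^sub>m 1\<^sub>m m - Y) \<noteq> 0"
    using poly_char_poly_det[OF X] poly_char_poly_det[OF Y] by auto
  show "poly (char_poly (join_mat X Y)) s = poly (char_poly X * char_poly Y
     - (Qp X n - char_poly X) * (Qp Y m - char_poly Y)) s"
    unfolding poly_char_poly_det[OF join_carrier[OF X Y]] join_det[OF X Y dX dY]
    by (simp add: poly_Qp[OF X] poly_Qp[OF Y] poly_char_poly_det[OF X] poly_char_poly_det[OF Y])
qed

lemma cp_compl_join: assumes X: "(X :: complex mat) \<in> carrier_mat n n" and Y: "Y \<in> carrier_mat m m"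
  shows "char_poly (compl_mat (join_mat X Y)) = char_poly (compl_mat X) * char_poly (compl_mat Y)"
proof (rule poly_eq_cofinite[of "{}"], simp)
  fix s
  show "poly (char_poly (compl_mat (join_mat X Y))) s = poly (char_poly (compl_mat X) * char_poly (compl_mat Y)) s"
    unfolding poly_char_poly_det[OF compl_carrier[OF join_carrier[OF X Y]]] compl_join_det[OF X Y]
    by (simp add: poly_char_poly_det[OF compl_carrier[OF X]] poly_char_poly_det[OF compl_carrier[OF Y]])
qed

lemma Qp_nz: assumes A: "(A :: complex mat) \<in> carrier_mat n n" shows "Qp A n \<noteq> 0"
proof
  assume "Qp A n = 0"
  hence "pcompose (char_poly (compl_mat A)) [:0,-1:] = 0" unfolding Qp_def by simp
  hence "char_poly (compl_mat A) = 0" by (simp add: pcompose_eq_0)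
  thus False using cp_nz[OF compl_carrier[OF A]] by simp
qed

theorem lemma3p1:
  fixes X Y X' Y' :: "complex mat" and n m n' m' :: nat
  assumes "X \<in> carrier_mat n n" and "Y \<in> carrier_mat m m"
    and "X' \<in> carrier_mat n' n'" and "Y' \<in> carrier_mat m' m'"
  shows "(spec_mset X = spec_mset X' \<and> spec_mset (compl_mat X) = spec_mset (compl_mat X') \<and>
          spec_mset Y = spec_mset Y' \<and> spec_mset (compl_mat Y) = spec_mset (compl_mat Y')
          \<longrightarrow> spec_mset (join_mat X Y) = spec_mset (join_mat X' Y') \<and>
              spec_mset (compl_mat (join_mat X Y)) = spec_mset (compl_mat (join_mat X' Y')))
       \<and> (spec_mset (join_mat X Y) = spec_mset (join_mat X' Y') \<and>
          spec_mset (compl_mat (join_mat X Y)) = spec_mset (compl_mat (join_mat X' Y')) \<and>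
          spec_mset Y = spec_mset Y' \<and> spec_mset (compl_mat Y) = spec_mset (compl_mat Y')
          \<longrightarrow> spec_mset X = spec_mset X' \<and>
              spec_mset (compl_mat X) = spec_mset (compl_mat X'))"
proof -
  note X = assms(1) and Y = assms(2) and X' = assms(3) and Y' = assms(4)
  note J = join_carrier[OF X Y] and J' = join_carrier[OF X' Y']
  note cX = compl_carrier[OF X] and cY = compl_carrier[OF Y]
  note cX' = compl_carrier[OF X'] and cY' = compl_carrier[OF Y']
  note cJ = compl_carrier[OF J] and cJ' = compl_carrier[OF J']
  note eqs = spec_cp[OF X X'] spec_cp[OF Y Y'] spec_cp[OF cX cX'] spec_cp[OF cY cY']
    spec_cp[OF J J'] spec_cp[OF cJ cJ']
  show ?thesis unfolding eqs
  proof (intro conjI impI; elim conjE)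
    assume 1: "char_poly X = char_poly X'" and 2: "char_poly (compl_mat X) = char_poly (compl_mat X')"
      and 3: "char_poly Y = char_poly Y'" and 4: "char_poly (compl_mat Y) = char_poly (compl_mat Y')"
    have nn: "n = n'" using cp_deg[OF X] cp_deg[OF X'] 1 by simp
    have mm: "m = m'" using cp_deg[OF Y] cp_deg[OF Y'] 3 by simp
    have q1: "Qp X n = Qp X' n'" unfolding Qp_def using nn 2 by simp
    have q2: "Qp Y m = Qp Y' m'" unfolding Qp_def using mm 4 by simp
    show "char_poly (join_mat X Y) = char_poly (join_mat X' Y')"
      unfolding cp_join[OF X Y] cp_join[OF X' Y'] q1 q2 1 3 ..
    show "char_poly (compl_mat (join_mat X Y)) = char_poly (compl_mat (join_mat X' Y'))"
      unfolding cp_compl_join[OF X Y] cp_compl_join[OF X' Y'] 2 4 ..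
  next
    assume 1: "char_poly (join_mat X Y) = char_poly (join_mat X' Y')"
      and 2: "char_poly (compl_mat (join_mat X Y)) = char_poly (compl_mat (join_mat X' Y'))"
      and 3: "char_poly Y = char_poly Y'" and 4: "char_poly (compl_mat Y) = char_poly (compl_mat Y')"
    have mm: "m = m'" using cp_deg[OF Y] cp_deg[OF Y'] 3 by simp
    have "n + m = n' + m'" using cp_deg[OF J] cp_deg[OF J'] 1 by simp
    hence nn: "n = n'" using mm by simp
    have q2: "Qp Y m = Qp Y' m'" unfolding Qp_def using mm 4 by simp
    have "char_poly (compl_mat X) * char_poly (compl_mat Y) = char_poly (compl_mat X') * char_poly (compl_mat Y)"
      using 2 unfolding cp_compl_join[OF X Y] cp_compl_join[OF X' Y'] 4 .
    thus c2: "char_poly (compl_mat X) = char_poly (compl_mat X')"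
      using cp_nz[OF cY] by simp
    have q1: "Qp X n = Qp X' n'" unfolding Qp_def using nn c2 by simp
    have "char_poly X * char_poly Y - (Qp X n - char_poly X) * (Qp Y m - char_poly Y)
        = char_poly X' * char_poly Y - (Qp X n - char_poly X') * (Qp Y m - char_poly Y)"
      using 1 unfolding cp_join[OF X Y] cp_join[OF X' Y'] q1 q2 3 .
    hence "char_poly X * Qp Y m = char_poly X' * Qp Y m" by (simp add: algebra_simps)
    thus "char_poly X = char_poly X'" using Qp_nz[OF Y] by simp
  qed
qed

end
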